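(* Let $V$ be a nonempty set (finite or infinite), let $E\subset V\times V$, and let $W\subset V$. For all vertices $b,c\in W^c=V\setminus W$ we have $$\operatorname{cl}_W\big(R_W b\big)\cap \operatorname{cl}_W\big(R_W c\big)=\emptyset \iff \neg\,\big(b\,A_W\,c\big),$$ that is, $b$ and $c$ are t-separated with respect to $W$ if and only if they are d-separated with respect to $W$.
   Context: Relations on $V$: $x\,R\,y$ means $(x,y)\in R$; the composition $RR'$ is defined by $x(RR')y$ iff there is $z\in V$ with $xRz$ and $zR'y$; $R^{-1}$ is the converse ($xR^{-1}y\iff yRx$); $R^0=\Delta$, $R^{n+1}=RR^n$, $R^+=\bigcup_{k\ge1}R^k$, $R^*=\bigcup_{k\ge0}R^k$. For $S\subset V$, $\Delta_S=\{(x,x):x\in S\}$ and $\Delta=\Delta_V$. For $S\subset V$, the foreset is $RS=\{x\in V:\exists s\in S,\ xRs\}$ and the afterset is $SR=\{y\in V:\exists s\in S,\ sRy\}$; for a vertex $c$, $Rc=R\{c\}$. For any relation $F$ on $V$, $\mathcal T_F=\{O\subset V: OF\subset O\}$ is a topology on $V$. Given $W\subset V$ with $W^c=V\setminus W$, define: $E_W=\Delta_{W^c}E$ (so $xE_Wy$ iff $x\in W^c$ and $xEy$); $B_W=E(E_W)^*$ and $B_W^-=(B_W)^{-1}=(E_W^{-1})^*E^{-1}$; $K_W=B_W^-\Delta_{W^c}B_W$ (equivalently $(E_W^{-1})^+(E_W)^+$); $C_W=(\Delta_WK_W\Delta_W)^+\cup\Delta_W$; $A_W=\Delta\cup B_W\cup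 B_W^-\cup K_W\cup(B_W\cup K_W)\,C_W\,(B_W^-\cup K_W^{-1})$; $R_W=\Delta\cup C_W(B_W^-\cup K_W^{-1})$. For $S\subset V$, $\operatorname{cl}_W(S)$ denotes the topological closure of $S$ in the topology $\mathcal T_{E_W}$. Vertices $b,c$ are called t-separated w.r.t. $W$ if $\operatorname{cl}_W(R_Wb)\cap\operatorname{cl}_W(R_Wc)=\emptyset$, and d-separated w.r.t. $W$ if $\neg(b\,A_W\,c)$. *)

theory Defs
  imports "HOL-Analysis.Analysis"
begin

(* The vertex set V is the (arbitrary, automatically nonempty) type 'a;
   relations on V are of type ('a \<times> 'a) set.  Composition R R' is R O R',
   Delta_S is Id_on S, R^* is rtrancl, R^+ is trancl. *)

definition rel_top :: "('a \<times> 'a) set \<Rightarrow> 'a topology" where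
  "rel_top F = topology (\<lambda>U. F `` U \<subseteq> U)"

definition EW :: "('a \<times> 'a) set \<Rightarrow> 'a set \<Rightarrow> ('a \<times> 'a) set" where
  "EW E W = Id_on (- W) O E"

definition BW :: "('a \<times> 'a) set \<Rightarrow> 'a set \<Rightarrow> ('a \<times> 'a) set" where
  "BW E W = E O (EW E W)\<^sup>*"

definition BWm :: "('a \<times> 'a) set \<Rightarrow> 'a set \<Rightarrow> ('a \<times> 'a) set" where
  "BWm E W = converse (BW E W)"

definition KW :: "('a \<times> 'a) set \<Rightarrow> 'a set \<Rightarrow> ('a \<times> 'a) set" where
  "KW E W = BWm E W O Id_on (- W) O BW E W"

definition CW :: "('a \<times> 'a) set \<Rightarrow> 'a set \<Rightarrow> ('a \<times> 'a) set" where
  "CW E W = (Id_on W O KW E W O Id_on W)\<^sup>+ \<union> Id_on W"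

definition AW :: "('a \<times> 'a) set \<Rightarrow> 'a set \<Rightarrow> ('a \<times> 'a) set" where
  "AW E W = Id \<union> BW E W \<union> BWm E W \<union> KW E W \<union>
     ((BW E W \<union> KW E W) O CW E W O (BWm E W \<union> converse (KW E W)))"

definition RW :: "('a \<times> 'a) set \<Rightarrow> 'a set \<Rightarrow> ('a \<times> 'a) set" where
  "RW E W = Id \<union> (CW E W O (BWm E W \<union> converse (KW E W)))"

definition foreset :: "('a \<times> 'a) set \<Rightarrow> 'a \<Rightarrow> 'a set" where
  "foreset R c = {x. (x, c) \<in> R}"

definition clW :: "('a \<times> 'a) set \<Rightarrow> 'a set \<Rightarrow> 'a set \<Rightarrow> 'a set" where
  "clW E W S = (rel_top (EW E W)) closure_of S"

end

theory Submission
  imports Defs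
begin

lemma istop_rel: "istopology (\<lambda>U. F `` U \<subseteq> U)"
  unfolding istopology_def by blast

lemma openin_rel_top: "openin (rel_top F) U \<longleftrightarrow> F `` U \<subseteq> U"
  by (simp only: rel_top_def topology_inverse'[OF istop_rel])

lemma topspace_rel_top: "topspace (rel_top F) = UNIV"
  unfolding topspace_def openin_rel_top by blast

lemma closure_rel_top:
  "rel_top F closure_of S = {x. \<exists>s\<in>S. (x, s) \<in> F\<^sup>*}"
proof (intro set_eqI iffI)
  fix x assume x: "x \<in> rel_top F closure_of S"
  have "openin (rel_top F) {y. (x, y) \<in> F\<^sup>*}"
    unfolding openin_rel_top by (auto intro: rtrancl_into_rtrancl)
  with x have "S \<inter> {y. (x, y) \<in> F\<^sup>*} \<noteq> {}"
    unfolding closure_of_def by auto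
  then show "x \<in> {x. \<exists>s\<in>S. (x, s) \<in> F\<^sup>*}" by blast
next
  fix x assume "x \<in> {x. \<exists>s\<in>S. (x, s) \<in> F\<^sup>*}"
  then obtain s where s: "s \<in> S" "(x, s) \<in> F\<^sup>*" by blast
  have "s \<in> T" if "x \<in> T" "F `` T \<subseteq> T" for T
    using s(2) that by (induction rule: rtrancl_induct) auto
  then have "\<forall>T. x \<in> T \<and> openin (rel_top F) T \<longrightarrow> S \<inter> T \<noteq> {}"
    using s(1) unfolding openin_rel_top by blast
  then show "x \<in> rel_top F closure_of S"
    unfolding closure_of_def topspace_rel_top by blast
qed

lemma EW_iff: "(x, y) \<in> EW E W \<longleftrightarrow> x \<notin> W \<and> (x, y) \<in> E"
  unfolding EW_def by auto

lemma BW_iff: "(x, y) \<in> BW E W \<longleftrightarrow> (\<exists>z. (x, z) \<in> E \<and> (z, y) \<in> (EW E W)\<^sup>*)"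
  unfolding BW_def by auto

lemma KW_iff: "(x, y) \<in> KW E W \<longleftrightarrow> (\<exists>z. z \<notin> W \<and> (z, x) \<in> BW E W \<and> (z, y) \<in> BW E W)"
  unfolding KW_def BWm_def by auto

lemma KW_sym: "(x, y) \<in> KW E W \<Longrightarrow> (y, x) \<in> KW E W"
  unfolding KW_iff by blast

lemma EWp_BW: "(x, y) \<in> (EW E W)\<^sup>+ \<Longrightarrow> x \<notin> W \<and> (x, y) \<in> BW E W"
  by (auto simp: trancl_unfold_left BW_iff EW_iff)

lemma BW_EWp: "x \<notin> W \<Longrightarrow> (x, y) \<in> BW E W \<Longrightarrow> (x, y) \<in> (EW E W)\<^sup>+"
  by (auto simp: trancl_unfold_left BW_iff EW_iff)

lemma CW_W: "(x, y) \<in> CW E W \<Longrightarrow> x \<in> W \<and> y \<in> W"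
proof -
  assume "(x, y) \<in> CW E W"
  then consider "(x, y) \<in> (Id_on W O KW E W O Id_on W)\<^sup>+" | "(x, y) \<in> Id_on W"
    unfolding CW_def by blast
  then show ?thesis
  proof cases
    case 1
    then show ?thesis
    proof (induction rule: trancl_induct)
      case (base y) then show ?case by auto
    next
      case (step y z) then show ?case by auto
    qed
  next
    case 2 then show ?thesis by auto
  qed
qed

lemma sym_inner: "sym (Id_on W O KW E W O Id_on W)"
  by (rule symI) (auto intro: KW_sym)

lemma CW_sym: "(x, y) \<in> CW E W \<Longrightarrow> (y, x) \<in> CW E W"
proof -
  assume a: "(x, y) \<in> CW E W"
  have s: "sym ((Id_on W O KW E W O Id_on W)\<^sup>+)" by (rule sym_trancl[OF sym_inner])
  from a[unfolded CW_def] show ?thesis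
  proof
    assume "(x, y) \<in> (Id_on W O KW E W O Id_on W)\<^sup>+"
    then have "(y, x) \<in> (Id_on W O KW E W O Id_on W)\<^sup>+" using s by (rule symD[rotated])
    then show ?thesis unfolding CW_def by (rule UnI1)
  next
    assume "(x, y) \<in> Id_on W" then show ?thesis unfolding CW_def by auto
  qed
qed

lemma CW_trans: "(x, y) \<in> CW E W \<Longrightarrow> (y, z) \<in> CW E W \<Longrightarrow> (x, z) \<in> CW E W"
  unfolding CW_def by (auto intro: trancl_trans)

lemma CW_refl: "x \<in> W \<Longrightarrow> (x, x) \<in> CW E W"
  unfolding CW_def by auto

lemma KW_CW: "x \<in> W \<Longrightarrow> y \<in> W \<Longrightarrow> (x, y) \<in> KW E W \<Longrightarrow> (x, y) \<in> CW E W"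
  unfolding CW_def by blast

lemma RW_iff: "(s, b) \<in> RW E W \<longleftrightarrow> s = b \<or>
   (\<exists>u. (s, u) \<in> CW E W \<and> ((b, u) \<in> BW E W \<or> (b, u) \<in> KW E W))"
  unfolding RW_def BWm_def by auto

lemma AW_iff: "(b, c) \<in> AW E W \<longleftrightarrow> b = c \<or> (b, c) \<in> BW E W \<or> (c, b) \<in> BW E W \<or>
   (b, c) \<in> KW E W \<or>
   (\<exists>u v. ((b, u) \<in> BW E W \<or> (b, u) \<in> KW E W) \<and> (u, v) \<in> CW E W \<and>
          ((c, v) \<in> BW E W \<or> (c, v) \<in> KW E W))"
  unfolding AW_def BWm_def by auto

lemma AW_I1: "b = c \<or> (b, c) \<in> BW E W \<or> (c, b) \<in> BW E W \<or> (b, c) \<in> KW E W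
  \<Longrightarrow> (b, c) \<in> AW E W"
  unfolding AW_def BWm_def by blast

lemma AW_I2: "(b, u) \<in> BW E W \<or> (b, u) \<in> KW E W \<Longrightarrow> (u, v) \<in> CW E W \<Longrightarrow>
   (c, v) \<in> BW E W \<or> (c, v) \<in> KW E W \<Longrightarrow> (b, c) \<in> AW E W"
  unfolding AW_def BWm_def by blast

lemma M_lemma:
  assumes "(z, s) \<in> (EW E W)\<^sup>*" "(z, t) \<in> (EW E W)\<^sup>*"
  shows "s = t \<or> (s \<notin> W \<and> (s, t) \<in> BW E W) \<or> (t \<notin> W \<and> (t, s) \<in> BW E W)
         \<or> (s, t) \<in> KW E W"
proof -
  from assms(1) have "z = s \<or> (z, s) \<in> (EW E W)\<^sup>+" by (meson rtranclD)
  moreover from assms(2) have "z = t \<or> (z, t) \<in> (EW E W)\<^sup>+" by (meson rtranclD)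
  ultimately show ?thesis
    using EWp_BW[of z s E W] EWp_BW[of z t E W] KW_iff[of s t E W] by blast
qed


definition PP :: "('a \<times> 'a) set \<Rightarrow> 'a set \<Rightarrow> 'a \<Rightarrow> 'a \<Rightarrow> bool" where
  "PP E W b u \<longleftrightarrow> (b, u) \<in> BW E W \<or> (b, u) \<in> KW E W"

lemma AW_I2': "PP E W b u \<Longrightarrow> (u, v) \<in> CW E W \<Longrightarrow> PP E W c v \<Longrightarrow> (b, c) \<in> AW E W"
  unfolding PP_def by (rule AW_I2)

lemma RW_cases:
  assumes "(s, b) \<in> RW E W"
  obtains "s = b" | u where "(s, u) \<in> CW E W" "PP E W b u"
  using assms unfolding RW_iff PP_def by blast

lemma AW_cases:
  assumes "(b, c) \<in> AW E W"
  obtains "b = c" | "(b, c) \<in> BW E W" | "(c, b) \<in> BW E W" | "(b, c) \<in> KW E W"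
   | u v where "PP E W b u" "(u, v) \<in> CW E W" "PP E W c v"
  using assms unfolding AW_iff PP_def by blast

lemma M_cases:
  assumes "(z, s) \<in> (EW E W)\<^sup>*" "(z, t) \<in> (EW E W)\<^sup>*"
  obtains "s = t" | "s \<notin> W" "(s, t) \<in> BW E W" | "t \<notin> W" "(t, s) \<in> BW E W"
    | "(s, t) \<in> KW E W"
  using M_lemma[OF assms] by blast

lemma fw:
  assumes b: "b \<notin> W" and c: "c \<notin> W"
    and zst: "(z, s) \<in> (EW E W)\<^sup>*" "(z, t) \<in> (EW E W)\<^sup>*"
      "(s, b) \<in> RW E W" "(t, c) \<in> RW E W"
  shows "(b, c) \<in> AW E W"
proof -
  note M = M_cases[OF zst(1,2)]
  from zst(3) show ?thesis
  proof (cases rule: RW_cases)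
    case 1
    from zst(4) show ?thesis
    proof (cases rule: RW_cases)
      case 1
      show ?thesis
      proof (rule M)
        assume "s = t" then show ?thesis using \<open>s = b\<close> 1 AW_I1 by metis
      next
        assume "(s, t) \<in> BW E W" then show ?thesis using \<open>s = b\<close> 1 AW_I1 by metis
      next
        assume "(t, s) \<in> BW E W" then show ?thesis using \<open>s = b\<close> 1 AW_I1 by metis
      next
        assume "(s, t) \<in> KW E W" then show ?thesis using \<open>s = b\<close> 1 AW_I1 by metis
      qed
    next
      case (2 v)
      then have tW: "t \<in> W" using CW_W by metis
      have "PP E W b t"
      proof (rule M)
        assume "s = t" then show ?thesis using \<open>s = b\<close> b tW by simp
      next
        assume "(s, t) \<in> BW E W" then show ?thesis using \<open>s = b\<close> unfolding PP_def by simp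
      next
        assume "t \<notin> W" then show ?thesis using tW by simp
      next
        assume "(s, t) \<in> KW E W" then show ?thesis using \<open>s = b\<close> unfolding PP_def by simp
      qed
      then show ?thesis using 2 AW_I2' by metis
    qed
  next
    case (2 u)
    then have sW: "s \<in> W" using CW_W by metis
    have us: "(u, s) \<in> CW E W" using 2 CW_sym by metis
    from zst(4) show ?thesis
    proof (cases rule: RW_cases)
      case 1
      have "PP E W c s"
      proof (rule M)
        assume "s = t" then show ?thesis using 1 c sW by simp
      next
        assume "s \<notin> W" then show ?thesis using sW by simp
      next
        assume "(t, s) \<in> BW E W" then show ?thesis using 1 unfolding PP_def by simp
      next
        assume "(s, t) \<in> KW E W" then show ?thesis using 1 KW_sym unfolding PP_def by metis
      qed
      then show ?thesis using 2 us AW_I2' by metis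
    next
      case (2 v)
      then have tW: "t \<in> W" using CW_W by metis
      have st: "(s, t) \<in> CW E W"
      proof (rule M)
        assume "s = t" then show ?thesis using sW CW_refl by metis
      next
        assume "s \<notin> W" then show ?thesis using sW by simp
      next
        assume "t \<notin> W" then show ?thesis using tW by simp
      next
        assume "(s, t) \<in> KW E W" then show ?thesis using sW tW KW_CW by metis
      qed
      have "(u, v) \<in> CW E W" using us st 2 CW_trans by metis
      then show ?thesis using \<open>PP E W b u\<close> 2 AW_I2' by metis
    qed
  qed
qed

lemma bw:
  assumes b: "b \<notin> W" and c: "c \<notin> W" and A: "(b, c) \<in> AW E W"
  shows "\<exists>z s t. (z, s) \<in> (EW E W)\<^sup>* \<and> (z, t) \<in> (EW E W)\<^sup>* \<and>
           (s, b) \<in> RW E W \<and> (t, c) \<in> RW E W"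
proof -
  have Rid: "(x, x) \<in> RW E W" for x unfolding RW_def by blast
  from A show ?thesis
  proof (cases rule: AW_cases)
    case 1 then show ?thesis using Rid by blast
  next
    case 2
    then have "(b, c) \<in> (EW E W)\<^sup>*" using BW_EWp b by (meson trancl_into_rtrancl)
    then show ?thesis using Rid by blast
  next
    case 3
    then have "(c, b) \<in> (EW E W)\<^sup>*" using BW_EWp c by (meson trancl_into_rtrancl)
    then show ?thesis using Rid by blast
  next
    case 4
    then obtain z where "z \<notin> W" "(z, b) \<in> BW E W" "(z, c) \<in> BW E W"
      unfolding KW_iff by blast
    then have "(z, b) \<in> (EW E W)\<^sup>*" "(z, c) \<in> (EW E W)\<^sup>*"
      using BW_EWp by (meson trancl_into_rtrancl)+
    then show ?thesis using Rid by blast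
  next
    case (5 u v)
    then have vW: "v \<in> W" using CW_W by metis
    have "(v, u) \<in> CW E W" using 5 CW_sym by metis
    then have "(v, b) \<in> RW E W" using 5 unfolding RW_iff PP_def by blast
    moreover have "(v, c) \<in> RW E W" using 5 CW_refl[OF vW] unfolding RW_iff PP_def by blast
    ultimately show ?thesis by blast
  qed
qed

lemma cl_iff: "clW E W (foreset (RW E W) b) \<inter> clW E W (foreset (RW E W) c) \<noteq> {}
    \<longleftrightarrow> (\<exists>z s t. (z, s) \<in> (EW E W)\<^sup>* \<and> (z, t) \<in> (EW E W)\<^sup>* \<and>
           (s, b) \<in> RW E W \<and> (t, c) \<in> RW E W)"
  unfolding clW_def closure_rel_top foreset_def by blast

theorem theorem1:
  fixes E :: "('a \<times> 'a) set" and W :: "'a set" and b c :: 'a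
  assumes "b \<notin> W" and "c \<notin> W"
  shows "clW E W (foreset (RW E W) b) \<inter> clW E W (foreset (RW E W) c) = {}
           \<longleftrightarrow> (b, c) \<notin> AW E W"
  using cl_iff[of E W b c] fw[OF assms] bw[OF assms] by blast

end
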